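(* Let $k$ be an odd integer with $k\ge 5$, let $D$ be a strong $k$-quasi-transitive digraph with $\mathrm{diam}(D)\ge k+2$, let $u,v\in V(D)$ with $d(u,v)=k+2$, and let $P=x_0x_1\ldots x_{k+2}$ be a shortest $(u,v)$-path. Let $I=\{x\in V(D)\setminus V(P): x\Rightarrow V(P)\}$ and $W=\{x\in V(D)\setminus V(P): V(P)\Rightarrow x\}$. If $D[V(P)]$ is a semicomplete digraph, then $x\mapsto V(P)$ for every $x\in I$ and $V(P)\mapsto y$ for every $y\in W$.
   Context: All digraphs are finite, without loops or multiple arcs (opposite arcs allowed). $x\rightarrow y$ means $xy\in A(D)$; $x,y$ are adjacent if $x\rightarrow y$ or $y\rightarrow x$. For disjoint vertex sets $X,Y$ (singletons identified with vertices): $X\rightarrow Y$ means every vertex of $X$ dominates every vertex of $Y$; $X\Rightarrow Y$ means there is no arc from $Y$ to $X$; $X\mapsto Y$ means both $X\rightarrow Y$ and $X\Rightarrow Y$. For $k\ge 2$, $D$ is $k$-quasi-transitive if for every path $x_0x_1\ldots x_k$ of length $k$, $x_0$ and $x_k$ are adjacent. $d(x,y)$ is the length of a shortest $(x,y)$-path, $\mathrm{diam}(D)=\max_{x,y}d(x,y)$. $D[S]$ is the induced subdigraph; a semicomplete digraph is one in which every two distinct vertices are adjacent. *)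

theory Defs
  imports Main
begin

definition digraph :: "'a set \<Rightarrow> ('a \<times> 'a) set \<Rightarrow> bool" where
  "digraph V A \<longleftrightarrow> finite V \<and> A \<subseteq> V \<times> V \<and> (\<forall>x. (x, x) \<notin> A)"

text \<open>A path is a nonempty list of distinct vertices, consecutive ones joined by arcs.
  Its length is the number of arcs, i.e. length of the list minus one.\<close>
definition is_path :: "'a set \<Rightarrow> ('a \<times> 'a) set \<Rightarrow> 'a list \<Rightarrow> bool" where
  "is_path V A p \<longleftrightarrow> p \<noteq> [] \<and> set p \<subseteq> V \<and> distinct p \<and>
     (\<forall>i. Suc i < length p \<longrightarrow> (p ! i, p ! Suc i) \<in> A)"

definition adjacent :: "('a \<times> 'a) set \<Rightarrow> 'a \<Rightarrow> 'a \<Rightarrow> bool" where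
  "adjacent A x y \<longleftrightarrow> (x, y) \<in> A \<or> (y, x) \<in> A"

definition k_quasi_transitive :: "nat \<Rightarrow> 'a set \<Rightarrow> ('a \<times> 'a) set \<Rightarrow> bool" where
  "k_quasi_transitive k V A \<longleftrightarrow>
     (\<forall>p. is_path V A p \<and> length p = k + 1 \<longrightarrow> adjacent A (hd p) (last p))"

definition strong :: "'a set \<Rightarrow> ('a \<times> 'a) set \<Rightarrow> bool" where
  "strong V A \<longleftrightarrow> (\<forall>x\<in>V. \<forall>y\<in>V. \<exists>p. is_path V A p \<and> hd p = x \<and> last p = y)"

definition dist :: "'a set \<Rightarrow> ('a \<times> 'a) set \<Rightarrow> 'a \<Rightarrow> 'a \<Rightarrow> nat" where
  "dist V A x y = (LEAST n. \<exists>p. is_path V A p \<and> hd p = x \<and> last p = y \<and> length p = n + 1)"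

definition diam :: "'a set \<Rightarrow> ('a \<times> 'a) set \<Rightarrow> nat" where
  "diam V A = Max {dist V A x y | x y. x \<in> V \<and> y \<in> V}"

definition semicomplete_on :: "('a \<times> 'a) set \<Rightarrow> 'a set \<Rightarrow> bool" where
  "semicomplete_on A S \<longleftrightarrow> (\<forall>x\<in>S. \<forall>y\<in>S. x \<noteq> y \<longrightarrow> adjacent A x y)"

text \<open>X \<rightarrow> Y: every vertex of X dominates every vertex of Y.\<close>
definition dominates :: "('a \<times> 'a) set \<Rightarrow> 'a set \<Rightarrow> 'a set \<Rightarrow> bool" where
  "dominates A X Y \<longleftrightarrow> (\<forall>x\<in>X. \<forall>y\<in>Y. (x, y) \<in> A)"

text \<open>X \<Rightarrow> Y: no arc from Y to X.\<close>
definition no_back_arcs :: "('a \<times> 'a) set \<Rightarrow> 'a set \<Rightarrow> 'a set \<Rightarrow> bool" where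
  "no_back_arcs A X Y \<longleftrightarrow> (\<forall>y\<in>Y. \<forall>x\<in>X. (y, x) \<notin> A)"

text \<open>X \<mapsto> Y: both X \<rightarrow> Y and X \<Rightarrow> Y.\<close>
definition strictly_dominates :: "('a \<times> 'a) set \<Rightarrow> 'a set \<Rightarrow> 'a set \<Rightarrow> bool" where
  "strictly_dominates A X Y \<longleftrightarrow> dominates A X Y \<and> no_back_arcs A X Y"

end

theory Submission
  imports Defs
begin


lemma last_map_upt: "p < q \<Longrightarrow> last (map f [p..<q]) = f (q - 1)"
  by (simp add: last_map del: upt_Suc)

lemma hd_map_upt: "p < q \<Longrightarrow> hd (map f [p..<q]) = f p"
  by (simp add: hd_map del: upt_Suc)

lemma is_path_single: "x \<in> V \<Longrightarrow> is_path V A [x]"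
  by (simp add: is_path_def)

lemma is_path_Cons:
  assumes "p \<noteq> []"
  shows "is_path V A (x # p) \<longleftrightarrow> x \<in> V \<and> x \<notin> set p \<and> (x, hd p) \<in> A \<and> is_path V A p"
proof
  assume h: "is_path V A (x # p)"
  have all: "\<forall>i. Suc i < length (x # p) \<longrightarrow> ((x # p) ! i, (x # p) ! Suc i) \<in> A"
    using h unfolding is_path_def by blast
  have "((x # p) ! 0, (x # p) ! Suc 0) \<in> A" using all assms by (metis length_Cons length_greater_0_conv Suc_less_eq)
  then have "(x, hd p) \<in> A" using assms by (simp add: hd_conv_nth)
  moreover have "\<forall>i. Suc i < length p \<longrightarrow> (p ! i, p ! Suc i) \<in> A"
  proof (intro allI impI)
    fix i assume "Suc i < length p"
    then have "((x # p) ! Suc i, (x # p) ! Suc (Suc i)) \<in> A" using all[rule_format, of "Suc i"] by simp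
    then show "(p ! i, p ! Suc i) \<in> A" by simp
  qed
  ultimately show "x \<in> V \<and> x \<notin> set p \<and> (x, hd p) \<in> A \<and> is_path V A p"
    using h assms unfolding is_path_def by simp
next
  assume h: "x \<in> V \<and> x \<notin> set p \<and> (x, hd p) \<in> A \<and> is_path V A p"
  have "\<forall>i. Suc i < length (x # p) \<longrightarrow> ((x # p) ! i, (x # p) ! Suc i) \<in> A"
  proof (intro allI impI)
    fix i assume i: "Suc i < length (x # p)"
    show "((x # p) ! i, (x # p) ! Suc i) \<in> A"
    proof (cases i)
      case 0 then show ?thesis using h assms by (simp add: hd_conv_nth)
    next
      case (Suc j)
      have "Suc j < length p" using i Suc by simp
      then have "(p ! j, p ! Suc j) \<in> A" using h unfolding is_path_def by blast
      then show ?thesis using Suc by simp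
    qed
  qed
  then show "is_path V A (x # p)" using h unfolding is_path_def by simp
qed

lemma is_path_append:
  assumes "p \<noteq> []" "q \<noteq> []"
  shows "is_path V A (p @ q) \<longleftrightarrow> is_path V A p \<and> is_path V A q \<and> set p \<inter> set q = {} \<and> (last p, hd q) \<in> A"
  using assms(1)
proof (induction p rule: list_nonempty_induct)
  case (single x)
  then show ?case using is_path_Cons[OF assms(2)] is_path_single by (auto simp: is_path_def)
next
  case (cons x p)
  have "p @ q \<noteq> []" using cons by simp
  then show ?case using cons is_path_Cons[OF cons(1)] is_path_Cons[of "p @ q" V A x]
    by (auto simp: hd_append)
qed

lemma is_path_drop: "is_path V A p \<Longrightarrow> n < length p \<Longrightarrow> is_path V A (drop n p)"
  unfolding is_path_def
  by (auto dest: in_set_dropD simp: distinct_drop)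

lemma is_path_take: "is_path V A p \<Longrightarrow> 0 < n \<Longrightarrow> is_path V A (take n p)"
  unfolding is_path_def
  by (auto dest: in_set_takeD)

lemma is_path_upt:
  assumes "is_path V A P" "p < q" "q \<le> length P"
  shows "is_path V A (map ((!) P) [p..<q])"
  unfolding is_path_def
proof (intro conjI allI impI)
  show "map ((!) P) [p..<q] \<noteq> []" using assms by simp
  show "set (map ((!) P) [p..<q]) \<subseteq> V" using assms unfolding is_path_def by auto
  have "inj_on ((!) P) {p..<q}" using assms unfolding is_path_def
    by (simp add: inj_on_def nth_eq_iff_index_eq)
  then show "distinct (map ((!) P) [p..<q])" by (simp add: distinct_map)
  fix i assume "Suc i < length (map ((!) P) [p..<q])"
  then show "(map ((!) P) [p..<q] ! i, map ((!) P) [p..<q] ! Suc i) \<in> A"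
    using assms unfolding is_path_def by auto
qed

lemma kqt_adj:
  assumes "k_quasi_transitive k V A" "is_path V A p" "length p = k + 1"
  shows "adjacent A (hd p) (last p)"
  using assms unfolding k_quasi_transitive_def by blast

lemma is_path_rev: "is_path V (converse A) (rev p) \<longleftrightarrow> is_path V A p"
proof -
  have *: "(\<forall>i. Suc i < length p \<longrightarrow> (rev p ! i, rev p ! Suc i) \<in> converse A) \<longleftrightarrow>
        (\<forall>i. Suc i < length p \<longrightarrow> (p ! i, p ! Suc i) \<in> A)"
  proof
    assume h: "\<forall>i. Suc i < length p \<longrightarrow> (rev p ! i, rev p ! Suc i) \<in> converse A"
    show "\<forall>i. Suc i < length p \<longrightarrow> (p ! i, p ! Suc i) \<in> A"
    proof (intro allI impI)
      fix i assume i: "Suc i < length p"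
      have "Suc (length p - 2 - i) < length p" using i by simp
      then have "(rev p ! (length p - 2 - i), rev p ! Suc (length p - 2 - i)) \<in> converse A" using h by blast
      moreover have "length p - 1 - (length p - 2 - i) = Suc i" "length p - 1 - Suc (length p - 2 - i) = i" using i by auto
      ultimately show "(p ! i, p ! Suc i) \<in> A" using i by (simp add: rev_nth)
    qed
  next
    assume h: "\<forall>i. Suc i < length p \<longrightarrow> (p ! i, p ! Suc i) \<in> A"
    show "\<forall>i. Suc i < length p \<longrightarrow> (rev p ! i, rev p ! Suc i) \<in> converse A"
    proof (intro allI impI)
      fix i assume i: "Suc i < length p"
      have "Suc (length p - 2 - i) < length p" using i by simp
      then have "(p ! (length p - 2 - i), p ! Suc (length p - 2 - i)) \<in> A" using h by blast
      moreover have "length p - 1 - i = Suc (length p - 2 - i)" "length p - 1 - Suc i = length p - 2 - i" using i by auto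
      ultimately show "(rev p ! i, rev p ! Suc i) \<in> converse A" using i by (simp add: rev_nth)
    qed
  qed
  show ?thesis unfolding is_path_def using * by auto
qed



locale kctx =
  fixes V :: "'a set" and A :: "('a \<times> 'a) set" and k :: nat and P :: "'a list"
  assumes kqt: "k_quasi_transitive k V A"
    and strg: "strong V A"
    and k5: "5 \<le> k" and oddk: "odd k"
    and Ppath: "is_path V A P" and lenP: "length P = k + 3"
    and bkarc: "\<And>i j. i + 2 \<le> j \<Longrightarrow> j < k + 3 \<Longrightarrow> (P ! j, P ! i) \<in> A"
    and nofwdarc: "\<And>i j. i + 2 \<le> j \<Longrightarrow> j < k + 3 \<Longrightarrow> (P ! i, P ! j) \<notin> A"
begin

lemma distP: "distinct P" using Ppath unfolding is_path_def by simp

lemma two_seg: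
  assumes "s < t" "t \<le> p" "p < q" "q \<le> k + 3" "s + 3 \<le> q"
  shows "is_path V A (map ((!) P) ([p..<q] @ [s..<t]))"
proof -
  have p1: "is_path V A (map ((!) P) [p..<q])" using is_path_upt[OF Ppath] assms lenP by auto
  have p2: "is_path V A (map ((!) P) [s..<t])" using is_path_upt[OF Ppath] assms lenP by auto
  have dj: "set (map ((!) P) [p..<q]) \<inter> set (map ((!) P) [s..<t]) = {}"
  proof (rule ccontr)
    assume "\<not> ?thesis"
    then obtain y where "y \<in> set (map ((!) P) [p..<q])" "y \<in> set (map ((!) P) [s..<t])" by blast
    then obtain a b where ab: "a \<in> {p..<q}" "b \<in> {s..<t}" "P ! a = P ! b" by auto
    then have "a = b" using distP lenP assms by (simp add: nth_eq_iff_index_eq)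
    then show False using ab assms by auto
  qed
  have ar: "(last (map ((!) P) [p..<q]), hd (map ((!) P) [s..<t])) \<in> A"
    using assms bkarc[of s "q - 1"] by (simp add: last_map_upt hd_map_upt del: upt_Suc)
  show ?thesis using is_path_append[of "map ((!) P) [p..<q]" "map ((!) P) [s..<t]" V A] p1 p2 dj ar assms
    by simp
qed

lemma setP_sub: "set (map ((!) P) xs) \<subseteq> set P" if "\<forall>i\<in>set xs. i < k + 3" for xs
  using that lenP by auto

lemma E1:
  assumes "i < k + 3" "1 \<le> a" "a \<le> k + 3"
  shows "\<exists>q. is_path V A q \<and> length q = a \<and> last q = P ! i \<and> set q \<subseteq> set P"
proof (cases "a \<le> i + 1")
  case True
  let ?q = "map ((!) P) [i + 1 - a..<i + 1]"
  have "is_path V A ?q" using is_path_upt[OF Ppath, of "i + 1 - a" "i + 1"] assms True lenP by linarith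
  moreover have "last ?q = P ! i" using assms True by (simp add: last_map_upt del: upt_Suc)
  ultimately show ?thesis using assms True lenP by (intro exI[of _ ?q]) auto
next
  case False
  let ?q = "map ((!) P) ([k + 3 - (a - i - 1)..<k + 3] @ [0..<i + 1])"
  have "is_path V A ?q" using two_seg[of 0 "i+1" "k + 3 - (a - i - 1)" "k+3"] assms False by auto
  moreover have "last ?q = P ! i" by (simp add: last_map_upt del: upt_Suc)
  ultimately show ?thesis using assms False lenP by (intro exI[of _ ?q]) auto
qed

lemma E2:
  assumes "h < k + 3" "1 \<le> a" "a \<le> k + 3"
  shows "\<exists>q. is_path V A q \<and> length q = a \<and> hd q = P ! h \<and> set q \<subseteq> set P"
proof (cases "h + a \<le> k + 3")
  case True
  let ?q = "map ((!) P) [h..<h + a]"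
  have "is_path V A ?q" using is_path_upt[OF Ppath] assms True lenP by auto
  moreover have "hd ?q = P ! h" using assms True by (simp add: hd_map_upt del: upt_Suc)
  ultimately show ?thesis using assms True lenP by (intro exI[of _ ?q]) auto
next
  case False
  let ?q = "map ((!) P) ([h..<k + 3] @ [0..<a - (k + 3 - h)])"
  have "is_path V A ?q" using two_seg[of 0 "a - (k + 3 - h)" h "k+3"] assms False by auto
  moreover have "hd ?q = P ! h" using assms by (simp add: hd_map_upt del: upt_Suc)
  ultimately show ?thesis using assms False lenP by (intro exI[of _ ?q]) auto
qed

lemma down_path:
  assumes "1 \<le> j" "j < k + 3"
  shows "\<exists>q. is_path V A q \<and> length q = k \<and> hd q = P ! j \<and> last q = P ! (j - 1) \<and> set q \<subseteq> set P"
proof -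
  define s where "s = min 3 (j - 1)"
  let ?q = "map ((!) P) ([j..<s + k] @ [s..<j])"
  have "is_path V A ?q" using two_seg[of s j j "s + k"] assms k5 unfolding s_def by auto
  moreover have sj: "s < j" "j < s + k" using assms k5 unfolding s_def by auto
  moreover have "hd ?q = P ! j" "last ?q = P ! (j - 1)" using sj
    by (simp_all add: hd_map_upt last_map_upt del: upt_Suc)
  moreover have "length ?q = k" using assms k5 unfolding s_def by auto
  moreover have "set ?q \<subseteq> set P" using assms k5 lenP unfolding s_def by auto
  ultimately show ?thesis by blast
qed

lemma fwd_path:
  assumes "j + k \<le> k + 3"
  shows "\<exists>q. is_path V A q \<and> length q = k \<and> hd q = P ! j \<and> last q = P ! (j + k - 1) \<and> set q \<subseteq> set P"
proof -
  let ?q = "map ((!) P) [j..<j + k]"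
  have "is_path V A ?q" using is_path_upt[OF Ppath] assms k5 lenP by auto
  moreover have "hd ?q = P ! j" "last ?q = P ! (j + k - 1)" using assms k5 by (auto simp: hd_map_upt last_map_upt del: upt_Suc)
  ultimately show ?thesis using assms k5 lenP by (intro exI[of _ ?q]) auto
qed

lemma extx:
  assumes x: "x \<in> V" "x \<notin> set P" and noin: "\<forall>w\<in>set P. (w, x) \<notin> A"
    and q: "is_path V A q" "length q = k" "set q \<subseteq> set P" "(x, hd q) \<in> A"
  shows "(x, last q) \<in> A"
proof -
  have ne: "q \<noteq> []" using q k5 by auto
  have "is_path V A (x # q)" using is_path_Cons[OF ne] x q by auto
  moreover have "length (x # q) = k + 1" using q by simp
  ultimately have "adjacent A (hd (x # q)) (last (x # q))" using kqt_adj[OF kqt] by blast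
  then have "adjacent A x (last q)" using ne by simp
  moreover have "last q \<in> set P" using ne q by auto
  ultimately show ?thesis using noin unfolding adjacent_def by auto
qed

lemma lemB:
  assumes x: "x \<in> V" "x \<notin> set P" and noin: "\<forall>w\<in>set P. (w, x) \<notin> A"
    and j: "j < k + 3" "(x, P ! j) \<in> A"
  shows "\<forall>i < k + 3. (x, P ! i) \<in> A"
proof -
  have downx: "\<And>j. j < k + 3 \<Longrightarrow> (x, P ! j) \<in> A \<Longrightarrow> \<forall>i\<le>j. (x, P ! i) \<in> A"
  proof -
    fix j assume j: "j < k + 3" "(x, P ! j) \<in> A"
    have "\<forall>d. d \<le> j \<longrightarrow> (x, P ! (j - d)) \<in> A"
    proof (intro allI)
      fix d show "d \<le> j \<longrightarrow> (x, P ! (j - d)) \<in> A"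
      proof (induction d)
        case 0 then show ?case using j by simp
      next
        case (Suc d)
        show ?case
        proof
          assume "Suc d \<le> j"
          then have h: "(x, P ! (j - d)) \<in> A" using Suc by simp
          have jd: "1 \<le> j - d" "j - d < k + 3" using \<open>Suc d \<le> j\<close> j by auto
          obtain q where "is_path V A q" "length q = k" "hd q = P ! (j - d)" "last q = P ! (j - d - 1)" "set q \<subseteq> set P"
            using down_path[OF jd] by blast
          then have "(x, P ! (j - d - 1)) \<in> A" using extx[OF x noin] h by metis
          then show "(x, P ! (j - Suc d)) \<in> A" by simp
        qed
      qed
    qed
    then show "\<forall>i\<le>j. (x, P ! i) \<in> A" by (metis diff_diff_cancel diff_le_self)
  qed
  have fwdx: "\<And>j. j + k \<le> k + 3 \<Longrightarrow> (x, P ! j) \<in> A \<Longrightarrow> (x, P ! (j + k - 1)) \<in> A"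
  proof -
    fix j assume a: "j + k \<le> k + 3" "(x, P ! j) \<in> A"
    obtain q where "is_path V A q" "length q = k" "hd q = P ! j" "last q = P ! (j + k - 1)" "set q \<subseteq> set P"
      using fwd_path[OF a(1)] by auto
    then show "(x, P ! (j + k - 1)) \<in> A" using extx[OF x noin] a by metis
  qed
  have "(x, P ! 0) \<in> A" using downx[OF j] by simp
  then have "(x, P ! (k - 1)) \<in> A" using fwdx[of 0] by simp
  then have "(x, P ! 3) \<in> A" using downx[of "k - 1"] k5 by simp
  then have "(x, P ! (k + 2)) \<in> A" using fwdx[of 3] by simp
  then show ?thesis using downx[of "k + 2"] by simp
qed

lemma nth_inj_z: "distinct z \<Longrightarrow> a < length z \<Longrightarrow> b < length z \<Longrightarrow> z ! a = z ! b \<longleftrightarrow> a = b"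
  by (simp add: nth_eq_iff_index_eq)

lemma lemA:
  assumes x: "x \<in> V" "x \<notin> set P" and noin: "\<forall>w\<in>set P. (w, x) \<notin> A"
  shows "\<exists>j < k + 3. (x, P ! j) \<in> A"
proof -
  let ?S = "\<lambda>z. is_path V A z \<and> hd z \<in> set P \<and> last z = x"
  have P0: "P ! 0 \<in> set P" "P ! 0 \<in> V" using lenP Ppath unfolding is_path_def by auto
  obtain z0 where "is_path V A z0" "hd z0 = P ! 0" "last z0 = x"
    using strg P0 x unfolding strong_def by blast
  then have "?S z0" using P0 by simp
  then obtain z where zS: "?S z" and zmin: "\<And>z'. ?S z' \<Longrightarrow> length z \<le> length z'"
    using ex_has_least_nat[of ?S z0 length] by blast
  have zp: "is_path V A z" "hd z \<in> set P" "last z = x" using zS by auto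
  have zne: "z \<noteq> []" and zd: "distinct z" and zV: "set z \<subseteq> V"
    using zp unfolding is_path_def by auto
  have zarc: "\<And>i. Suc i < length z \<Longrightarrow> (z ! i, z ! Suc i) \<in> A"
    using zp unfolding is_path_def by blast
  define m where "m = length z - 1"
  have lz: "length z = m + 1" using zne unfolding m_def by simp
  have zlast: "z ! m = x" using zp zne unfolding m_def by (simp add: last_conv_nth)
  have zhd: "z ! 0 = hd z" using zne by (simp add: hd_conv_nth)
  have M1: "\<And>a. 0 < a \<Longrightarrow> a \<le> m \<Longrightarrow> z ! a \<notin> set P"
  proof
    fix a assume a: "0 < a" "a \<le> m" "z ! a \<in> set P"
    have "?S (drop a z)" using is_path_drop[OF zp(1)] a lz zp zne
      by (simp add: hd_drop_conv_nth)
    then have "length z \<le> length (drop a z)" by (rule zmin)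
    then show False using a lz by simp
  qed
  have M2: "\<And>a b. a + 2 \<le> b \<Longrightarrow> b \<le> m \<Longrightarrow> (z ! a, z ! b) \<notin> A"
  proof
    fix a b assume ab: "a + 2 \<le> b" "b \<le> m" "(z ! a, z ! b) \<in> A"
    have t: "is_path V A (take (a + 1) z)" using is_path_take[OF zp(1)] by simp
    have d: "is_path V A (drop b z)" using is_path_drop[OF zp(1)] ab lz by simp
    have ne1: "take (a + 1) z \<noteq> []" and ne2: "drop b z \<noteq> []" using zne ab lz by auto
    have dj: "set (take (a + 1) z) \<inter> set (drop b z) = {}"
      using set_take_disj_set_drop_if_distinct[OF zd, of "a + 1" b] ab by simp
    have l1: "last (take (a + 1) z) = z ! a" using ab lz by (simp add: take_Suc_conv_app_nth)
    have h2: "hd (drop b z) = z ! b" using ab lz by (simp add: hd_drop_conv_nth)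
    have "is_path V A (take (a + 1) z @ drop b z)"
      using is_path_append[OF ne1 ne2] t d dj l1 h2 ab by simp
    moreover have "hd (take (a + 1) z @ drop b z) = hd z" using ne1 zne by simp
    moreover have "last (take (a + 1) z @ drop b z) = x" using ne2 zp by simp
    ultimately have "?S (take (a + 1) z @ drop b z)" using zp by simp
    then have "length z \<le> length (take (a + 1) z @ drop b z)" by (rule zmin)
    then show False using ab lz by simp
  qed
  have M3: "\<And>w b. w \<in> set P \<Longrightarrow> 2 \<le> b \<Longrightarrow> b \<le> m \<Longrightarrow> (w, z ! b) \<notin> A"
  proof
    fix w b assume wb: "w \<in> set P" "2 \<le> b" "b \<le> m" "(w, z ! b) \<in> A"
    have d: "is_path V A (drop b z)" using is_path_drop[OF zp(1)] wb lz by simp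
    have ne2: "drop b z \<noteq> []" using wb lz by auto
    have "w \<notin> set (drop b z)"
    proof
      assume "w \<in> set (drop b z)"
      then obtain c where "c < length (drop b z)" "drop b z ! c = w" by (auto simp: in_set_conv_nth)
      then have "z ! (b + c) = w" "b + c \<le> m" using lz by auto
      then show False using M1[of "b + c"] wb by auto
    qed
    moreover have "w \<in> V" using wb Ppath unfolding is_path_def by auto
    moreover have "hd (drop b z) = z ! b" using wb lz by (simp add: hd_drop_conv_nth)
    ultimately have "is_path V A (w # drop b z)" using is_path_Cons[OF ne2] d wb by simp
    then have "?S (w # drop b z)" using wb ne2 zp by simp
    then have "length z \<le> length (w # drop b z)" by (rule zmin)
    then show False using wb lz by simp
  qed
  have zseg: "\<And>a b. a \<le> b \<Longrightarrow> b \<le> m \<Longrightarrow> is_path V A (map ((!) z) [a..<Suc b])"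
  proof -
    fix a b assume "a \<le> b" "b \<le> m"
    then show "is_path V A (map ((!) z) [a..<Suc b])"
      using is_path_upt[OF zp(1), of a "Suc b"] lz by (simp del: upt_Suc)
  qed
  obtain i0 where i0: "i0 < k + 3" "P ! i0 = z ! 0" using zp(2) zhd lenP by (metis in_set_conv_nth)
  have m1: "m \<noteq> 0"
  proof
    assume "m = 0" then have "z ! 0 = x" using zlast by simp
    then show False using zp zhd x by simp
  qed
  have m2: "m \<noteq> 1"
  proof
    assume "m = 1" then have "(z ! 0, x) \<in> A" using zarc[of 0] zlast lz by simp
    then show False using noin zp zhd by simp
  qed
  have dropz1: "is_path V A (drop 1 z)" using is_path_drop[OF zp(1)] lz m1 by simp
  have dropz1P: "set (drop 1 z) \<inter> set P = {}"
  proof (rule ccontr)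
    assume "set (drop 1 z) \<inter> set P \<noteq> {}"
    then obtain w where "w \<in> set (drop 1 z)" "w \<in> set P" by blast
    then obtain c where "c < length (drop 1 z)" "drop 1 z ! c = w" by (auto simp: in_set_conv_nth)
    then have "z ! (1 + c) = w" "1 + c \<le> m" using lz by auto
    then show False using M1[of "1 + c"] \<open>w \<in> set P\<close> by auto
  qed
  show ?thesis
  proof (cases "m \<le> k")
    case True
    have "\<exists>q. is_path V A q \<and> length q = k - m + 1 \<and> last q = P ! i0 \<and> set q \<subseteq> set P"
      using E1[OF i0(1), of "k - m + 1"] True by simp
    then obtain q where q: "is_path V A q" "length q = k - m + 1" "last q = P ! i0" "set q \<subseteq> set P"
      by blast
    have qne: "q \<noteq> []" using q by auto
    have ne2: "drop 1 z \<noteq> []" using lz m1 by simp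
    have "is_path V A (q @ drop 1 z)"
      using is_path_append[OF qne ne2] q dropz1 dropz1P zarc[of 0] i0 lz m1
      by (auto simp: hd_drop_conv_nth)
    moreover have "length (q @ drop 1 z) = k + 1" using q lz True m1 m2 by simp
    ultimately have "adjacent A (hd (q @ drop 1 z)) (last (q @ drop 1 z))" using kqt_adj[OF kqt] by blast
    then have "adjacent A (hd q) x" using qne ne2 zp by simp
    moreover have "hd q \<in> set P" using qne q by auto
    ultimately have "(x, hd q) \<in> A" using noin unfolding adjacent_def by auto
    then show ?thesis using \<open>hd q \<in> set P\<close> lenP by (metis in_set_conv_nth)
  next
    case False
    have M4: "\<And>a. a + k \<le> m \<Longrightarrow> (z ! (a + k), z ! a) \<in> A"
    proof -
      fix a assume a: "a + k \<le> m"
      have "is_path V A (map ((!) z) [a..<Suc (a + k)])" using zseg[of a "a + k"] a by simp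
      moreover have "length (map ((!) z) [a..<Suc (a + k)]) = k + 1" by simp
      ultimately have "adjacent A (hd (map ((!) z) [a..<Suc (a + k)])) (last (map ((!) z) [a..<Suc (a + k)]))"
        using kqt_adj[OF kqt] by blast
      then have "adjacent A (z ! a) (z ! (a + k))" by (simp add: hd_map_upt last_map_upt del: upt_Suc)
      then show "(z ! (a + k), z ! a) \<in> A" using M2[of a "a + k"] a k5 unfolding adjacent_def by auto
    qed
    have desc: "\<And>d. 2 * d \<le> m - k \<Longrightarrow> (x, z ! (m - k - 2 * d)) \<in> A"
    proof -
      fix d show "2 * d \<le> m - k \<Longrightarrow> (x, z ! (m - k - 2 * d)) \<in> A"
      proof (induction d)
        case 0
        have "is_path V A (map ((!) z) [m - k..<Suc m])" using zseg[of "m - k" m] by simp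
        moreover have "length (map ((!) z) [m - k..<Suc m]) = k + 1" using False by simp
        ultimately have "adjacent A (hd (map ((!) z) [m - k..<Suc m])) (last (map ((!) z) [m - k..<Suc m]))"
          using kqt_adj[OF kqt] by blast
        then have "adjacent A (z ! (m - k)) (z ! m)" using False by (simp add: hd_map_upt last_map_upt del: upt_Suc)
        then show ?case using M2[of "m - k" m] zlast k5 False unfolding adjacent_def by auto
      next
        case (Suc d)
        define a where "a = m - k - 2 * d"
        have a2: "2 \<le> a" "a + k \<le> m" using Suc.prems False unfolding a_def by auto
        have xa: "(x, z ! a) \<in> A" using Suc unfolding a_def by simp
        let ?s = "map ((!) z) [a..<a + k - 1]"
        have sp: "is_path V A ?s" using is_path_upt[OF zp(1), of a "a + k - 1"] a2 k5 lz by simp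
        have sne: "?s \<noteq> []" using k5 by simp
        have sl: "last ?s = z ! (a + k - 2)" using k5 by (simp add: last_map_upt numeral_2_eq_2 del: upt_Suc)
        have sh: "hd ?s = z ! a" using k5 by (simp add: hd_map_upt del: upt_Suc)
        have zi: "\<And>i j. i \<le> m \<Longrightarrow> j \<le> m \<Longrightarrow> z ! i = z ! j \<longleftrightarrow> i = j"
          using nth_inj_z[OF zd] lz by simp
        have "z ! (a - 2) \<notin> set ?s"
        proof
          assume "z ! (a - 2) \<in> set ?s"
          then obtain c where "c \<in> {a..<a + k - 1}" "z ! c = z ! (a - 2)" by auto
          moreover have "c \<le> m" "a - 2 \<le> m" using calculation a2 by auto
          ultimately show False using zi[of c "a - 2"] a2 by auto
        qed
        then have dj: "set ?s \<inter> set [z ! (a - 2)] = {}" by simp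
        have e: "a - 2 + k = a + k - 2" using a2 by simp
        have "(z ! (a - 2 + k), z ! (a - 2)) \<in> A" using M4[of "a - 2"] a2 by simp
        then have bk: "(z ! (a + k - 2), z ! (a - 2)) \<in> A" unfolding e .
        have "z ! (a - 2) \<in> set z" using lz a2 by simp
        then have zaV: "z ! (a - 2) \<in> V" using zV by blast
        have p2: "is_path V A (?s @ [z ! (a - 2)])"
          using is_path_append[OF sne, of "[z ! (a - 2)]" V A] sp dj sl bk is_path_single[OF zaV]
          by simp
        have "x \<notin> set (?s @ [z ! (a - 2)])"
        proof
          assume "x \<in> set (?s @ [z ! (a - 2)])"
          then have "x \<in> set ?s \<or> x = z ! (a - 2)" by auto
          then obtain c where c: "c \<in> {a..<a + k - 1} \<or> c = a - 2" "z ! c = z ! m"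
          proof
            assume "x \<in> set ?s"
            then obtain c where "c \<in> {a..<a + k - 1}" "x = z ! c" by auto
            then show ?thesis using that[of c] zlast by auto
          next
            assume "x = z ! (a - 2)"
            then show ?thesis using that[of "a - 2"] zlast by auto
          qed
          have "c \<le> m" "c \<noteq> m" using c(1) a2 by auto
          then show False using zi[of c m] c(2) by simp
        qed
        then have "is_path V A (x # ?s @ [z ! (a - 2)])"
          using is_path_Cons[of "?s @ [z ! (a - 2)]"] p2 x xa sh sne by simp
        moreover have "length (x # ?s @ [z ! (a - 2)]) = k + 1" using k5 by simp
        ultimately have "adjacent A (hd (x # ?s @ [z ! (a - 2)])) (last (x # ?s @ [z ! (a - 2)]))"
          using kqt_adj[OF kqt] by blast
        then have "adjacent A x (z ! (a - 2))" by simp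
        moreover have "(z ! (a - 2), x) \<notin> A" using M2[of "a - 2" m] zlast a2 by simp
        ultimately have "(x, z ! (a - 2)) \<in> A" unfolding adjacent_def by auto
        moreover have "a - 2 = m - k - 2 * Suc d" unfolding a_def by simp
        ultimately show ?case by simp
      qed
    qed
    show ?thesis
    proof (cases "even (m - k)")
      case True
      have "(x, z ! (m - k - 2 * ((m - k) div 2))) \<in> A" using desc by simp
      then have "(x, z ! 0) \<in> A" using True by simp
      then show ?thesis using i0 by metis
    next
      case odd: False
      have "(x, z ! (m - k - 2 * ((m - k) div 2))) \<in> A" using desc by simp
      moreover have "2 * ((m - k) div 2) = m - k - 1" using odd by (simp add: odd_two_times_div_two_nat)
      moreover have "m - k \<ge> 1" using odd by (cases "m - k") auto
      ultimately have x1: "(x, z ! 1) \<in> A" by simp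
      have "\<exists>q. is_path V A q \<and> length q = k - 1 \<and> last q = P ! i0 \<and> set q \<subseteq> set P"
        using E1[OF i0(1), of "k - 1"] k5 by simp
      then obtain q1 where q1: "is_path V A q1" "length q1 = k - 1" "last q1 = P ! i0" "set q1 \<subseteq> set P"
        by blast
      have q1ne: "q1 \<noteq> []" using q1 k5 by auto
      have t_eq: "map ((!) z) [1..<3] = [z ! 1, z ! 2]" by (simp add: numeral_3_eq_3 numeral_2_eq_2)
      have tp: "is_path V A [z ! 1, z ! 2]" using is_path_upt[OF zp(1), of 1 3] lz False k5 t_eq by simp
      have tne: "[z ! 1, z ! 2] \<noteq> []" by simp
      have z1P: "z ! 1 \<notin> set P" using M1[of 1] False k5 by simp
      have z2P: "z ! 2 \<notin> set P" using M1[of 2] False k5 by simp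
      have tP: "set [z ! 1, z ! 2] \<inter> set P = {}" using z1P z2P by simp
      have tq1: "set q1 \<inter> set [z ! 1, z ! 2] = {}" using tP q1(4) by blast
      have a01: "(last q1, hd [z ! 1, z ! 2]) \<in> A" using zarc[of 0] i0 q1(3) lz False k5 by simp
      have "is_path V A (q1 @ [z ! 1, z ! 2])"
        using is_path_append[OF q1ne tne] q1(1) tp tq1 a01 by blast
      moreover have "length (q1 @ [z ! 1, z ! 2]) = k + 1" using q1 k5 by simp
      ultimately have "adjacent A (hd (q1 @ [z ! 1, z ! 2])) (last (q1 @ [z ! 1, z ! 2]))" using kqt_adj[OF kqt] by blast
      then have "adjacent A (hd q1) (z ! 2)" using q1ne by simp
      moreover have h1P: "hd q1 \<in> set P" using q1 q1ne by auto
      moreover have "(hd q1, z ! 2) \<notin> A" using M3[of "hd q1" 2] h1P False k5 by simp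
      ultimately have z2h: "(z ! 2, hd q1) \<in> A" unfolding adjacent_def by blast
      obtain h where h: "h < k + 3" "P ! h = hd q1" using h1P lenP by (metis in_set_conv_nth)
      have "\<exists>q. is_path V A q \<and> length q = k - 2 \<and> hd q = P ! h \<and> set q \<subseteq> set P"
        using E2[OF h(1), of "k - 2"] k5 by simp
      then obtain q2 where q2: "is_path V A q2" "length q2 = k - 2" "hd q2 = P ! h" "set q2 \<subseteq> set P"
        by blast
      have q2ne: "q2 \<noteq> []" using q2 k5 by auto
      have tq2: "set [z ! 1, z ! 2] \<inter> set q2 = {}" using tP q2(4) by blast
      have a2h: "(last [z ! 1, z ! 2], hd q2) \<in> A" using z2h h q2(3) by simp
      have "is_path V A ([z ! 1, z ! 2] @ q2)"
        using is_path_append[OF tne q2ne] q2(1) tp tq2 a2h by blast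
      moreover have "x \<notin> set ([z ! 1, z ! 2] @ q2)"
      proof
        assume "x \<in> set ([z ! 1, z ! 2] @ q2)"
        moreover have "x \<notin> set q2" using q2 x by auto
        ultimately have "x = z ! 1 \<or> x = z ! 2" by auto
        moreover have "z ! m \<noteq> z ! 1" "z ! m \<noteq> z ! 2"
          using nth_inj_z[OF zd, of m 1] nth_inj_z[OF zd, of m 2] lz False k5 by auto
        ultimately show False using zlast by auto
      qed
      moreover have "(x, hd ([z ! 1, z ! 2] @ q2)) \<in> A" using x1 by simp
      moreover have "([z ! 1, z ! 2] @ q2) \<noteq> []" by simp
      ultimately have "is_path V A (x # [z ! 1, z ! 2] @ q2)"
        using is_path_Cons[of "[z ! 1, z ! 2] @ q2" V A x] x(1) by blast
      moreover have "length (x # [z ! 1, z ! 2] @ q2) = k + 1" using q2 k5 by simp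
      ultimately have "adjacent A (hd (x # [z ! 1, z ! 2] @ q2)) (last (x # [z ! 1, z ! 2] @ q2))"
        using kqt_adj[OF kqt] by blast
      then have "adjacent A x (last q2)" using q2ne by simp
      moreover have "last q2 \<in> set P" using q2 q2ne by auto
      ultimately have "(x, last q2) \<in> A" using noin unfolding adjacent_def by auto
      then show ?thesis using \<open>last q2 \<in> set P\<close> lenP by (metis in_set_conv_nth)
    qed
  qed
qed

lemma core:
  assumes x: "x \<in> V" "x \<notin> set P" and noin: "\<forall>w\<in>set P. (w, x) \<notin> A"
  shows "\<forall>w\<in>set P. (x, w) \<in> A"
proof -
  obtain j where "j < k + 3" "(x, P ! j) \<in> A" using lemA[OF x noin] by blast
  then have "\<forall>i < k + 3. (x, P ! i) \<in> A" using lemB[OF x noin] by blast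
  then show ?thesis using lenP by (metis in_set_conv_nth)
qed

end


lemma kctx_rev:
  assumes "kctx V A k P"
  shows "kctx V (converse A) k (rev P)"
proof -
  interpret kctx V A k P by (rule assms)
  have L: "length P = k + 3" by (rule lenP)
  show ?thesis
  proof
    show "k_quasi_transitive k V (converse A)"
      unfolding k_quasi_transitive_def
    proof (intro allI impI)
      fix p assume h: "is_path V (converse A) p \<and> length p = k + 1"
      have ne: "p \<noteq> []" using h unfolding is_path_def by simp
      have "is_path V A (rev p)" using h is_path_rev[of V A "rev p"] by simp
      moreover have "length (rev p) = k + 1" using h by simp
      ultimately have "adjacent A (hd (rev p)) (last (rev p))" using kqt_adj[OF kqt] by blast
      then show "adjacent (converse A) (hd p) (last p)" using ne
        by (auto simp: adjacent_def hd_rev last_rev)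
    qed
    show "strong V (converse A)"
      unfolding strong_def
    proof (intro ballI)
      fix x y assume "x \<in> V" "y \<in> V"
      then obtain p where p: "is_path V A p" "hd p = y" "last p = x" using strg unfolding strong_def by blast
      have ne: "p \<noteq> []" using p unfolding is_path_def by simp
      have "is_path V (converse A) (rev p)" using p is_path_rev by blast
      then show "\<exists>p. is_path V (converse A) p \<and> hd p = x \<and> last p = y"
        using p ne by (intro exI[of _ "rev p"]) (simp add: hd_rev last_rev)
    qed
    show "5 \<le> k" by (rule k5)
    show "odd k" by (rule oddk)
    show "is_path V (converse A) (rev P)" using Ppath is_path_rev by blast
    show "length (rev P) = k + 3" using L by simp
    show "(rev P ! j, rev P ! i) \<in> converse A" if "i + 2 \<le> j" "j < k + 3" for i j
    proof -
      have "(P ! (k + 2 - i), P ! (k + 2 - j)) \<in> A" using bkarc[of "k + 2 - j" "k + 2 - i"] that by simp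
      moreover have "k + 3 - Suc i = k + 2 - i" "k + 3 - Suc j = k + 2 - j" by simp_all
      ultimately show ?thesis using that L by (simp add: rev_nth)
    qed
    show "(rev P ! i, rev P ! j) \<notin> converse A" if "i + 2 \<le> j" "j < k + 3" for i j
    proof -
      have "(P ! (k + 2 - j), P ! (k + 2 - i)) \<notin> A" using nofwdarc[of "k + 2 - j" "k + 2 - i"] that by simp
      moreover have "k + 3 - Suc i = k + 2 - i" "k + 3 - Suc j = k + 2 - j" by simp_all
      ultimately show ?thesis using that L by (simp add: rev_nth)
    qed
  qed
qed

theorem lemma2p12:
  fixes V :: "'a set" and A :: "('a \<times> 'a) set" and k :: nat and u v :: 'a and P :: "'a list"
  assumes "digraph V A"
    and "odd k" and "k \<ge> 5"
    and "strong V A" and "k_quasi_transitive k V A"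
    and "diam V A \<ge> k + 2"
    and "u \<in> V" and "v \<in> V" and "dist V A u v = k + 2"
    and "is_path V A P" and "hd P = u" and "last P = v" and "length P = dist V A u v + 1"
    and "semicomplete_on A (set P)"
  shows "(\<forall>x \<in> {x \<in> V - set P. no_back_arcs A {x} (set P)}. strictly_dominates A {x} (set P)) \<and>
         (\<forall>y \<in> {y \<in> V - set P. no_back_arcs A (set P) {y}}. strictly_dominates A (set P) {y})"
proof -
  have L: "length P = k + 3" using assms by simp
  have Pp: "is_path V A P" by (rule assms(10))
  have dP: "distinct P" and Pne: "P \<noteq> []" using Pp unfolding is_path_def by auto
  have nf: "(P ! i, P ! j) \<notin> A" if ij: "i + 2 \<le> j" "j < k + 3" for i j
  proof
    assume arc: "(P ! i, P ! j) \<in> A"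
    have t: "is_path V A (take (i + 1) P)" using is_path_take[OF Pp] by simp
    have d: "is_path V A (drop j P)" using is_path_drop[OF Pp] ij L by simp
    have ne1: "take (i + 1) P \<noteq> []" and ne2: "drop j P \<noteq> []" using Pne ij L by auto
    have dj: "set (take (i + 1) P) \<inter> set (drop j P) = {}"
      using set_take_disj_set_drop_if_distinct[OF dP, of "i + 1" j] ij by simp
    have l1: "last (take (i + 1) P) = P ! i" using ij L by (simp add: take_Suc_conv_app_nth)
    have h2: "hd (drop j P) = P ! j" using ij L by (simp add: hd_drop_conv_nth)
    have qp: "is_path V A (take (i + 1) P @ drop j P)"
      using is_path_append[OF ne1 ne2] t d dj l1 h2 arc by simp
    have qh: "hd (take (i + 1) P @ drop j P) = u" using ne1 Pne assms(11) by simp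
    have ql: "last (take (i + 1) P @ drop j P) = v" using ne2 assms(12) by simp
    have qlen: "length (take (i + 1) P @ drop j P) = (k + 2 - (j - i - 1)) + 1" using ij L by simp
    have "dist V A u v \<le> k + 2 - (j - i - 1)"
      unfolding dist_def by (rule Least_le) (use qp qh ql qlen in blast)
    then show False using assms(9) ij by simp
  qed
  have bk: "(P ! j, P ! i) \<in> A" if ij: "i + 2 \<le> j" "j < k + 3" for i j
  proof -
    have "P ! i \<in> set P" "P ! j \<in> set P" using ij L by auto
    moreover have "P ! i \<noteq> P ! j" using ij L dP by (simp add: nth_eq_iff_index_eq)
    ultimately have "adjacent A (P ! i) (P ! j)" using assms(14) unfolding semicomplete_on_def by blast
    then show ?thesis using nf[OF ij] unfolding adjacent_def by blast
  qed
  have K: "kctx V A k P"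
    using assms(2,3,4,5) Pp L bk nf by unfold_locales auto
  have K': "kctx V (converse A) k (rev P)" by (rule kctx_rev[OF K])
  show ?thesis
  proof (intro conjI ballI)
    fix x assume "x \<in> {x \<in> V - set P. no_back_arcs A {x} (set P)}"
    then have x: "x \<in> V" "x \<notin> set P" and nb: "\<forall>w\<in>set P. (w, x) \<notin> A"
      unfolding no_back_arcs_def by auto
    have "\<forall>w\<in>set P. (x, w) \<in> A" using kctx.core[OF K x nb] .
    then show "strictly_dominates A {x} (set P)"
      using nb unfolding strictly_dominates_def dominates_def no_back_arcs_def by auto
  next
    fix y assume "y \<in> {y \<in> V - set P. no_back_arcs A (set P) {y}}"
    then have y: "y \<in> V" "y \<notin> set (rev P)" and nb: "\<forall>w\<in>set (rev P). (w, y) \<notin> converse A"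
      unfolding no_back_arcs_def by auto
    have "\<forall>w\<in>set (rev P). (y, w) \<in> converse A" using kctx.core[OF K' y nb] .
    then show "strictly_dominates A (set P) {y}"
      using nb unfolding strictly_dominates_def dominates_def no_back_arcs_def by auto
  qed
qed

end
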